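(* Let $G$ be a compact Hausdorff topological group acting continuously by isometries on a proper, purely $1$-unrectifiable metric space $\mathcal{M}$. Then $\mathcal{M}/G$ is purely $1$-unrectifiable.
   Context: $\mathcal{M}/G=\{\overline{Gx}:x\in\mathcal{M}\}$ with the metric $d_{\mathcal{M}/G}(\overline{Gx},\overline{Gy})=\inf\{d(x',y'):x'\in\overline{Gx},y'\in\overline{Gy}\}$ (the Hausdorff distance). A metric space is proper if closed balls are compact; it is purely $1$-unrectifiable if for every $A\subset\mathbb{R}$ and every Lipschitz $f:A\to\mathcal{M}$ the $1$-dimensional Hausdorff measure of $f(A)$ is $0$. *)

theory Defs
  imports "HOL-Analysis.Analysis"
begin

definition ediam :: "('a \<Rightarrow> 'a \<Rightarrow> real) \<Rightarrow> 'a set \<Rightarrow> ennreal" where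
  "ediam d S = (SUP x\<in>S. SUP y\<in>S. ennreal (d x y))"

definition hausdorff1_pre :: "'a set \<Rightarrow> ('a \<Rightarrow> 'a \<Rightarrow> real) \<Rightarrow> real \<Rightarrow> 'a set \<Rightarrow> ennreal" where
  "hausdorff1_pre M d \<delta> E =
     (INF C \<in> {C :: nat \<Rightarrow> 'a set. (\<forall>i. C i \<subseteq> M \<and> ediam d (C i) \<le> ennreal \<delta>) \<and> E \<subseteq> (\<Union>i. C i)}.
        (\<Sum>i. ediam d (C i)))"

definition hausdorff1 :: "'a set \<Rightarrow> ('a \<Rightarrow> 'a \<Rightarrow> real) \<Rightarrow> 'a set \<Rightarrow> ennreal" where
  "hausdorff1 M d E = (SUP \<delta>\<in>{0<..}. hausdorff1_pre M d \<delta> E)"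

definition purely_1_unrectifiable :: "'a set \<Rightarrow> ('a \<Rightarrow> 'a \<Rightarrow> real) \<Rightarrow> bool" where
  "purely_1_unrectifiable M d \<longleftrightarrow>
     (\<forall>(A :: real set) (f :: real \<Rightarrow> 'a) L.
        f ` A \<subseteq> M \<and> (\<forall>x\<in>A. \<forall>y\<in>A. d (f x) (f y) \<le> L * dist x y)
        \<longrightarrow> hausdorff1 M d (f ` A) = 0)"

definition orbit_closures :: "('g \<Rightarrow> 'm \<Rightarrow> 'm::topological_space) \<Rightarrow> 'm set set" where
  "orbit_closures act = {closure (range (\<lambda>g. act g x)) | x. True}"

definition quot_dist :: "'m::metric_space set \<Rightarrow> 'm set \<Rightarrow> real" where
  "quot_dist A B = Inf {dist x y | x y. x \<in> A \<and> y \<in> B}"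

end

theory Submission
  imports Defs
begin

lemma ediam_image_le:
  assumes "\<And>x y. x \<in> S \<Longrightarrow> y \<in> S \<Longrightarrow> d' (p x) (p y) \<le> d x y"
  shows "ediam d' (p ` S) \<le> ediam d S"
  unfolding ediam_def image_image
  by (intro SUP_subset_mono order_refl ennreal_leI assms)

lemma hausdorff1_image_le:
  assumes "p ` M \<subseteq> M'" and "\<And>x y. x \<in> M \<Longrightarrow> y \<in> M \<Longrightarrow> d' (p x) (p y) \<le> d x y"
    and "E' \<subseteq> p ` E"
  shows "hausdorff1 M' d' E' \<le> hausdorff1 M d E"
  unfolding hausdorff1_def
proof (rule SUP_mono')
  fix \<delta> :: real
  show "hausdorff1_pre M' d' \<delta> E' \<le> hausdorff1_pre M d \<delta> E"
    unfolding hausdorff1_pre_def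
  proof (rule INF_greatest)
    fix C assume C: "C \<in> {C :: nat \<Rightarrow> _ set. (\<forall>i. C i \<subseteq> M \<and> ediam d (C i) \<le> ennreal \<delta>) \<and> E \<subseteq> (\<Union>i. C i)}"
    have le: "ediam d' (p ` C i) \<le> ediam d (C i)" for i
    proof (rule ediam_image_le)
      fix x y assume "x \<in> C i" "y \<in> C i"
      moreover have "C i \<subseteq> M" using C by simp
      ultimately show "d' (p x) (p y) \<le> d x y" using assms(2) by blast
    qed
    have C1: "\<And>i. C i \<subseteq> M" "\<And>i. ediam d (C i) \<le> ennreal \<delta>" "E \<subseteq> (\<Union>i. C i)"
      using C by auto
    have "\<And>i. p ` C i \<subseteq> M'" using C1(1) assms(1) by blast
    moreover have "\<And>i. ediam d' (p ` C i) \<le> ennreal \<delta>" using le C1(2) by (rule order_trans)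
    moreover have "E' \<subseteq> (\<Union>i. p ` C i)"
    proof
      fix x assume "x \<in> E'"
      then obtain e where e: "e \<in> E" "x = p e" using assms(3) by blast
      then obtain i where "e \<in> C i" using C1(3) by blast
      then show "x \<in> (\<Union>i. p ` C i)" using e(2) by blast
    qed
    ultimately have "(\<lambda>i. p ` C i) \<in> {C. (\<forall>i. C i \<subseteq> M' \<and> ediam d' (C i) \<le> ennreal \<delta>) \<and> E' \<subseteq> (\<Union>i. C i)}"
      by simp
    then have "(INF C \<in> {C. (\<forall>i. C i \<subseteq> M' \<and> ediam d' (C i) \<le> ennreal \<delta>) \<and> E' \<subseteq> (\<Union>i. C i)}.
        (\<Sum>i. ediam d' (C i))) \<le> (\<Sum>i. ediam d' (p ` C i))"
      by (rule INF_lower)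
    also have "\<dots> \<le> (\<Sum>i. ediam d (C i))"
      by (rule suminf_le[OF le summableI summableI])
    finally show "(INF C \<in> {C. (\<forall>i. C i \<subseteq> M' \<and> ediam d' (C i) \<le> ennreal \<delta>) \<and> E' \<subseteq> (\<Union>i. C i)}.
        (\<Sum>i. ediam d' (C i))) \<le> (\<Sum>i. ediam d (C i))" .
  qed
qed

locale isoact =
  fixes act :: "'g::{topological_group_add, t2_space} \<Rightarrow> 'm::metric_space \<Rightarrow> 'm"
  assumes G_compact: "compact (UNIV :: 'g set)"
    and act_zero: "\<And>x. act 0 x = x"
    and act_add: "\<And>g h x. act (g + h) x = act g (act h x)"
    and act_cont: "continuous_on UNIV (\<lambda>p :: 'g \<times> 'm. act (fst p) (snd p))"
    and act_isom: "\<And>g x y. dist (act g x) (act g y) = dist x y"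
begin

definition orb :: "'m \<Rightarrow> 'm set" where "orb x = range (\<lambda>g. act g x)"

lemma cont_orb: "continuous_on UNIV (\<lambda>g. act g x)"
proof -
  have "continuous_on UNIV (\<lambda>g::'g. (g, x))" by (intro continuous_intros)
  then have "continuous_on UNIV ((\<lambda>p :: 'g \<times> 'm. act (fst p) (snd p)) \<circ> (\<lambda>g. (g, x)))"
    by (rule continuous_on_compose) (rule continuous_on_subset[OF act_cont], simp)
  then show ?thesis by (simp add: o_def)
qed

lemma compact_orb: "compact (orb x)"
  unfolding orb_def by (rule compact_continuous_image[OF cont_orb G_compact])

lemma closure_orb: "closure (orb x) = orb x"
  using compact_orb compact_imp_closed closure_closed by blast

lemma in_orb: "x \<in> orb x"
  unfolding orb_def using act_zero by (metis rangeI)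

lemma act_inv: "act (- g) (act g x) = x"
  by (metis act_add act_zero left_minus)

lemma orb_eq: "y \<in> orb x \<Longrightarrow> orb y = orb x"
proof -
  assume "y \<in> orb x"
  then obtain h where y: "y = act h x" unfolding orb_def by auto
  have "act g x = act (g - h + h) x" for g by simp
  then have "act g x \<in> range (\<lambda>k. act (k + h) x)" for g by blast
  then show ?thesis unfolding orb_def y by (auto simp: act_add[symmetric])
qed

lemma quot_dist_le: "quot_dist (orb x) (orb y) \<le> dist x y"
  unfolding quot_dist_def
  by (rule cInf_lower) (use in_orb in blast, rule bdd_belowI[of _ 0], auto)

lemma nearest: "\<exists>z'\<in>orb z. dist x z' = quot_dist (orb x) (orb z)"
proof -
  have "continuous_on (orb z) (dist x)" by (intro continuous_intros)
  then obtain z' where z': "z' \<in> orb z" "\<And>q. q \<in> orb z \<Longrightarrow> dist x z' \<le> dist x q"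
    using continuous_attains_inf[OF compact_orb, of z "dist x"] in_orb by blast
  have "quot_dist (orb x) (orb z) = dist x z'"
    unfolding quot_dist_def
  proof (rule cInf_eq_minimum)
    show "dist x z' \<in> {dist p q |p q. p \<in> orb x \<and> q \<in> orb z}" using z'(1) in_orb by blast
  next
    fix r assume "r \<in> {dist p q |p q. p \<in> orb x \<and> q \<in> orb z}"
    then obtain g q where r: "r = dist (act g x) q" "q \<in> orb z" unfolding orb_def by auto
    have "act (-g) q \<in> orb z" using r(2) unfolding orb_def by (auto simp: act_add[symmetric])
    moreover have "dist (act g x) q = dist x (act (-g) q)"
      using act_isom[of "-g" "act g x" q] act_inv by simp
    ultimately show "dist x z' \<le> r" using z'(2) r by simp
  qed
  then show ?thesis using z'(1) by (intro bexI[of _ z']) simp_all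
qed

lemma chain:
  fixes rep :: "real \<Rightarrow> 'm"
  assumes lip: "\<And>x y. x \<in> A \<Longrightarrow> y \<in> A \<Longrightarrow> quot_dist (orb (rep x)) (orb (rep y)) \<le> L * dist x y"
    and fin: "finite F"
  shows "F \<subseteq> A \<longrightarrow> (\<exists>s. (\<forall>a. s a \<in> orb (rep a)) \<and> (\<forall>a\<in>F. \<forall>b\<in>F. dist (s a) (s b) \<le> L * dist a b))"
  using fin
proof (induction F rule: finite_linorder_max_induct)
  case empty
  show ?case by (intro impI exI[of _ rep]) (simp add: in_orb)
next
  case (insert b F)
  show ?case
  proof
    assume sub: "insert b F \<subseteq> A"
    then obtain s where s: "\<forall>a. s a \<in> orb (rep a)" "\<forall>a\<in>F. \<forall>c\<in>F. dist (s a) (s c) \<le> L * dist a c"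
      using insert.IH by blast
    show "\<exists>s. (\<forall>a. s a \<in> orb (rep a)) \<and> (\<forall>a\<in>insert b F. \<forall>c\<in>insert b F. dist (s a) (s c) \<le> L * dist a c)"
    proof (cases "F = {}")
      case True
      then show ?thesis using s(1) by (intro exI[of _ s]) simp
    next
      case False
      define m where "m = Max F"
      have m1: "m \<in> F" using False insert.hyps(1) m_def by (simp add: Max_in)
      have m: "m \<in> F" "m < b" using m1 insert.hyps(2) by auto
      have am: "a \<le> m" if "a \<in> F" for a using that insert.hyps(1) m_def by simp
      obtain z where z: "z \<in> orb (rep b)" "dist (s m) z = quot_dist (orb (s m)) (orb (rep b))"
        using nearest by blast
      have "orb (s m) = orb (rep m)" using s(1) orb_eq by blast
      moreover have "m \<in> A" "b \<in> A" using m sub by auto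
      ultimately have zm: "dist (s m) z \<le> L * (b - m)"
        using z(2) lip[of m b] m(2) by (simp add: dist_real_def)
      have key: "dist (s a) z \<le> L * dist a b" if "a \<in> F" for a
      proof -
        have "dist (s a) z \<le> dist (s a) (s m) + dist (s m) z" by (rule dist_triangle)
        also have "\<dots> \<le> L * (m - a) + L * (b - m)"
        proof (rule add_mono)
          have "dist (s a) (s m) \<le> L * dist a m" using s(2) that m(1) by blast
          then show "dist (s a) (s m) \<le> L * (m - a)" using am[OF that]
            by (simp add: dist_real_def)
        qed (rule zm)
        also have "\<dots> = L * dist a b" using am[OF that] m by (simp add: dist_real_def algebra_simps)
        finally show ?thesis .
      qed
      have bF: "b \<notin> F" using insert by auto
      define s' where "s' = s(b := z)"
      have "\<forall>a. s' a \<in> orb (rep a)" using s(1) z(1) by (simp add: s'_def)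
      moreover have "\<forall>a\<in>insert b F. \<forall>c\<in>insert b F. dist (s' a) (s' c) \<le> L * dist a c"
      proof (intro ballI)
        fix a c assume a: "a \<in> insert b F" and c: "c \<in> insert b F"
        show "dist (s' a) (s' c) \<le> L * dist a c"
        proof (cases "a = b")
          case True
          show ?thesis
          proof (cases "c = b")
            case True then show ?thesis using \<open>a = b\<close> by simp
          next
            case False then have "c \<in> F" using c by simp
            then show ?thesis using key[of c] \<open>a = b\<close> False
              by (simp add: s'_def dist_commute[of z] dist_commute[of b])
          qed
        next
          case False
          then have aF: "a \<in> F" using a by simp
          show ?thesis
          proof (cases "c = b")
            case True then show ?thesis using key[OF aF] False by (simp add: s'_def)
          next
            case False then have "c \<in> F" using c by simp
            then show ?thesis using s(2) aF \<open>a \<noteq> b\<close> False by (simp add: s'_def)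
          qed
        qed
      qed
      ultimately show ?thesis by blast
    qed
  qed
qed

lemma lift:
  fixes rep :: "real \<Rightarrow> 'm"
  assumes lip: "\<And>x y. x \<in> A \<Longrightarrow> y \<in> A \<Longrightarrow> quot_dist (orb (rep x)) (orb (rep y)) \<le> L * dist x y"
  shows "\<exists>s. (\<forall>a. s a \<in> orb (rep a)) \<and> (\<forall>a\<in>A. \<forall>b\<in>A. dist (s a) (s b) \<le> L * dist a b)"
proof -
  define K where "K = PiE UNIV (\<lambda>a. orb (rep a))"
  have "compactin (product_topology (\<lambda>i. euclidean) UNIV) K"
    unfolding K_def compactin_PiE by (simp add: compact_orb)
  then have cK: "compact K" by (simp add: euclidean_product_topology)
  define C where "C = (\<lambda>(a::real, b::real). {s :: real \<Rightarrow> 'm. dist (s a) (s b) \<le> L * dist a b})"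
  have "K \<inter> (\<Inter>i\<in>A \<times> A. C i) \<noteq> {}"
  proof (rule compact_imp_fip_image[OF cK])
    fix i assume "i \<in> A \<times> A"
    obtain a b where i: "i = (a, b)" by fastforce
    have "continuous_on UNIV (\<lambda>s :: real \<Rightarrow> 'm. dist (s a) (s b))"
      by (rule continuous_on_dist[OF continuous_on_product_coordinates continuous_on_product_coordinates])
    then show "closed (C i)" unfolding C_def i
      by (simp add: closed_Collect_le continuous_on_const)
  next
    fix I' assume I': "finite I'" "I' \<subseteq> A \<times> A"
    define F where "F = fst ` I' \<union> snd ` I'"
    have fF: "finite F" using I' unfolding F_def by auto
    have FA: "F \<subseteq> A" using I' unfolding F_def by auto
    have "\<exists>s. (\<forall>a. s a \<in> orb (rep a)) \<and> (\<forall>a\<in>F. \<forall>b\<in>F. dist (s a) (s b) \<le> L * dist a b)"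
      by (rule mp[OF chain[OF lip fF] FA])
    then obtain s where s: "\<forall>a. s a \<in> orb (rep a)" "\<forall>a\<in>F. \<forall>b\<in>F. dist (s a) (s b) \<le> L * dist a b"
      by blast
    have "s \<in> K" using s(1) unfolding K_def by auto
    moreover have "s \<in> C i" if "i \<in> I'" for i
    proof -
      obtain a b where i: "i = (a, b)" by fastforce
      have "a \<in> F" "b \<in> F" using that i unfolding F_def by force+
      then have "dist (s a) (s b) \<le> L * dist a b" using s(2) by blast
      then show ?thesis unfolding C_def i by simp
    qed
    ultimately show "K \<inter> (\<Inter>i\<in>I'. C i) \<noteq> {}" by blast
  qed
  then obtain s where "s \<in> K" and sC: "\<And>a b. a \<in> A \<Longrightarrow> b \<in> A \<Longrightarrow> s \<in> C (a, b)" by blast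
  moreover have "\<forall>a. s a \<in> orb (rep a)" using \<open>s \<in> K\<close> unfolding K_def by auto
  moreover have "\<forall>a\<in>A. \<forall>b\<in>A. dist (s a) (s b) \<le> L * dist a b"
  proof (intro ballI)
    fix a b assume "a \<in> A" "b \<in> A"
    then have "s \<in> C (a, b)" by (rule sC)
    then show "dist (s a) (s b) \<le> L * dist a b" unfolding C_def by simp
  qed
  ultimately show ?thesis by blast
qed

end


theorem corollary4p11:
  fixes act :: "'g::{topological_group_add, t2_space} \<Rightarrow> 'm::metric_space \<Rightarrow> 'm"
  assumes G_compact: "compact (UNIV :: 'g set)"
    and act_zero: "\<And>x. act 0 x = x"
    and act_add: "\<And>g h x. act (g + h) x = act g (act h x)"
    and act_cont: "continuous_on UNIV (\<lambda>p :: 'g \<times> 'm. act (fst p) (snd p))"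
    and act_isom: "\<And>g x y. dist (act g x) (act g y) = dist x y"
    and proper: "\<And>(x :: 'm) r. compact (cball x r)"
    and pu: "purely_1_unrectifiable (UNIV :: 'm set) dist"
  shows "purely_1_unrectifiable (orbit_closures act) quot_dist"
proof -
  interpret isoact act
    using G_compact act_zero act_add act_cont act_isom by (simp add: isoact_def)
  show ?thesis unfolding purely_1_unrectifiable_def
  proof (intro allI impI)
    fix A :: "real set" and f :: "real \<Rightarrow> 'm set" and L :: real
    assume H: "f ` A \<subseteq> orbit_closures act \<and> (\<forall>x\<in>A. \<forall>y\<in>A. quot_dist (f x) (f y) \<le> L * dist x y)"
    have "\<forall>a\<in>A. \<exists>x. f a = orb x"
    proof
      fix a assume "a \<in> A"
      then have "f a \<in> orbit_closures act" using H by blast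
      then obtain x where "f a = closure (range (\<lambda>g. act g x))" unfolding orbit_closures_def by blast
      then have "f a = orb x" using closure_orb unfolding orb_def by simp
      then show "\<exists>x. f a = orb x" by blast
    qed
    then obtain rep where rep: "\<And>a. a \<in> A \<Longrightarrow> f a = orb (rep a)" by metis
    have lip: "quot_dist (orb (rep x)) (orb (rep y)) \<le> L * dist x y" if "x \<in> A" "y \<in> A" for x y
    proof -
      have "quot_dist (f x) (f y) \<le> L * dist x y" using H that by blast
      then show ?thesis using rep[OF that(1)] rep[OF that(2)] by simp
    qed
    obtain s where s: "\<forall>a. s a \<in> orb (rep a)" "\<forall>a\<in>A. \<forall>b\<in>A. dist (s a) (s b) \<le> L * dist a b"
      using lift[OF lip] by blast
    have h0: "hausdorff1 UNIV dist (s ` A) = 0"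
      using pu[unfolded purely_1_unrectifiable_def, rule_format, of s A L] s(2) by simp
    have "hausdorff1 (orbit_closures act) quot_dist (f ` A) \<le> hausdorff1 UNIV dist (s ` A)"
    proof (rule hausdorff1_image_le[where p = orb])
      show "orb ` UNIV \<subseteq> orbit_closures act"
      proof
        fix X assume "X \<in> orb ` UNIV"
        then obtain x where "X = orb x" by blast
        then have "X = closure (range (\<lambda>g. act g x))" using closure_orb unfolding orb_def by simp
        then show "X \<in> orbit_closures act" unfolding orbit_closures_def by blast
      qed
    next
      fix x y :: 'm
      show "quot_dist (orb x) (orb y) \<le> dist x y" by (rule quot_dist_le)
    next
      show "f ` A \<subseteq> orb ` s ` A"
      proof
        fix X assume "X \<in> f ` A"
        then obtain a where a: "a \<in> A" "X = f a" by blast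
        have "orb (s a) = orb (rep a)" using s(1) orb_eq by blast
        then have "X = orb (s a)" using a rep by simp
        then show "X \<in> orb ` s ` A" using a(1) by blast
      qed
    qed
    then show "hausdorff1 (orbit_closures act) quot_dist (f ` A) = 0" using h0 by simp
  qed
qed

end
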